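(* Let $\mathcal G$ be a Lie superalgebra over a field of characteristic zero, with $\mathcal U_{1-}$, $\bullet$ and the extended bracket $[\cdot,\cdot]$ as described below. For any homogeneous $A,B,C\in\mathcal U_{1-}$, $$[A,B]\bullet C=[A,B\bullet C]+(-1)^{|B||C|}[A\bullet C,B].$$
   Context: Set $\mathcal U_1=\mathcal G$ with its $\mathbb Z_2$-grading. For $p\ge1$ define recursively $\mathcal U_{-p+1}=\mathrm{Hom}(\mathcal U_1,\mathcal U_{-p+2})$, $\mathbb Z_2$-graded by declaring $A$ even (resp. odd) if it preserves (resp. reverses) parity; $|u|$ is the parity of a homogeneous element. Elements of $\mathcal U_{1-p}$ are operators of order $p$ (elements of $\mathcal G$ have order $0$); $\mathcal U_{1-}=\bigoplus_{p\ge0}\mathcal U_{1-p}$. Define $\circ$: $A\circ y=A(y)$, $y\circ A=0$ for $A$ of order $\ge1$ and $y\in\mathcal U_1$; for $A,B$ of orders $\ge1$, recursively $(A\circ B)(x)=A\circ B(x)+(-1)^{|B||x|}A(x)\circ B$. Define $\bullet$: $A_p\bullet B_q=\frac{p!q!}{(p+q-1)!}A_p\circ B_q$ for orders $p,q\ge1$; $A_p\bullet x=pA_p(x)$, $x\bullet A_p=0$, $x\bullet y=0$ for $x,y\in\mathcal U_1$. The bracket of $\mathcal G$ is extended to $\mathcal U_{1-}$: on $\mathcal G$ it is the given bracket, and for operators $A,B$ of orders $p,q$ with $p+q\ge1$, $[A,B]$ is the operator of order $p+q$ (parity $|A|+|B|$) defined recursively by $[A,B]\bullet x=[A,B\bullet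 x]+(-1)^{|x||B|}[A\bullet x,B]$ for all $x\in\mathcal G$. *)

theory Defs
  imports Complex_Main
begin

text \<open>Parity is encoded by bool (False = even, True = odd); addition of parities is xor,
  i.e. (\<noteq>). The super vector space G is the type 'g, a vector space over the field 'k
  (scalar multiplication sc), with homogeneous components G0 (even) and G1 (odd).\<close>

definition gr :: "'g set \<Rightarrow> 'g set \<Rightarrow> bool \<Rightarrow> 'g set" where
  "gr G0 G1 i = (if i then G1 else G0)"

definition psign :: "bool \<Rightarrow> 'k::ring_1" where
  "psign b = (if b then -1 else 1)"

definition proj :: "'g set \<Rightarrow> 'g set \<Rightarrow> bool \<Rightarrow> 'g \<Rightarrow> 'g::ab_group_add" where
  "proj G0 G1 i x = (THE y. y \<in> gr G0 G1 i \<and> x - y \<in> gr G0 G1 (\<not> i))"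

definition lie_superalgebra ::
  "('k::field \<Rightarrow> 'g::ab_group_add \<Rightarrow> 'g) \<Rightarrow> 'g set \<Rightarrow> 'g set \<Rightarrow> ('g \<Rightarrow> 'g \<Rightarrow> 'g) \<Rightarrow> bool" where
  "lie_superalgebra sc G0 G1 lb \<longleftrightarrow>
     vector_space sc \<and>
     (\<forall>i. 0 \<in> gr G0 G1 i \<and> (\<forall>x\<in>gr G0 G1 i. \<forall>y\<in>gr G0 G1 i. x + y \<in> gr G0 G1 i) \<and>
          (\<forall>c. \<forall>x\<in>gr G0 G1 i. sc c x \<in> gr G0 G1 i)) \<and>
     G0 \<inter> G1 = {0} \<and> (\<forall>x. \<exists>y\<in>G0. \<exists>z\<in>G1. x = y + z) \<and>
     (\<forall>x y z. lb (x + y) z = lb x z + lb y z) \<and>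
     (\<forall>x y z. lb x (y + z) = lb x y + lb x z) \<and>
     (\<forall>c x y. lb (sc c x) y = sc c (lb x y)) \<and>
     (\<forall>c x y. lb x (sc c y) = sc c (lb x y)) \<and>
     (\<forall>i j x y. x \<in> gr G0 G1 i \<longrightarrow> y \<in> gr G0 G1 j \<longrightarrow> lb x y \<in> gr G0 G1 (i \<noteq> j)) \<and>
     (\<forall>i j x y. x \<in> gr G0 G1 i \<longrightarrow> y \<in> gr G0 G1 j \<longrightarrow>
        lb x y = - sc (psign (i \<and> j)) (lb y x)) \<and>
     (\<forall>i j k x y z. x \<in> gr G0 G1 i \<longrightarrow> y \<in> gr G0 G1 j \<longrightarrow> z \<in> gr G0 G1 k \<longrightarrow>
        lb x (lb y z) = lb (lb x y) z + sc (psign (i \<and> j)) (lb y (lb x z)))"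

text \<open>An operator of order p (an element of U_{1-p} = Hom(G, U_{2-p})) is represented by its
  fully uncurried form: a function on lists of length p, multilinear; A(x) corresponds to
  the function ys \<mapsto> f (x # ys). Order 0 operators are the elements f [] of G.
  Values on lists of other lengths are irrelevant.
  An element X of U_{1-} = \<Oplus>_p U_{1-p} is a family X :: nat \<Rightarrow> 'g list \<Rightarrow> 'g, where X p is
  its component of order p; only finitely many components are non-zero.\<close>

definition U_elem :: "('k::field \<Rightarrow> 'g::ab_group_add \<Rightarrow> 'g) \<Rightarrow> (nat \<Rightarrow> 'g list \<Rightarrow> 'g) \<Rightarrow> bool" where
  "U_elem sc X \<longleftrightarrow>
     finite {n. \<exists>xs. length xs = n \<and> X n xs \<noteq> 0} \<and>
     (\<forall>n xs k u v. length xs = n \<longrightarrow> k < n \<longrightarrow>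
        X n (xs[k := u + v]) = X n (xs[k := u]) + X n (xs[k := v])) \<and>
     (\<forall>n xs k c u. length xs = n \<longrightarrow> k < n \<longrightarrow>
        X n (xs[k := sc c u]) = sc c (X n (xs[k := u])))"

text \<open>Homogeneous of parity a: for homogeneous arguments of parities ps, the value has
  parity a + sum ps.  (Even operators preserve parity, odd ones reverse it.)\<close>
definition U_hom :: "('k::field \<Rightarrow> 'g::ab_group_add \<Rightarrow> 'g) \<Rightarrow> 'g set \<Rightarrow> 'g set \<Rightarrow> bool
    \<Rightarrow> (nat \<Rightarrow> 'g list \<Rightarrow> 'g) \<Rightarrow> bool" where
  "U_hom sc G0 G1 a X \<longleftrightarrow> U_elem sc X \<and>
     (\<forall>n xs ps. length xs = n \<longrightarrow> length ps = n \<longrightarrow> (\<forall>k<n. xs ! k \<in> gr G0 G1 (ps ! k)) \<longrightarrow>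
        X n xs \<in> gr G0 G1 (foldr (\<lambda>p acc. p \<noteq> acc) ps a))"

definition U_eq :: "(nat \<Rightarrow> 'g list \<Rightarrow> 'g) \<Rightarrow> (nat \<Rightarrow> 'g list \<Rightarrow> 'g) \<Rightarrow> bool" where
  "U_eq X Y \<longleftrightarrow> (\<forall>n xs. length xs = n \<longrightarrow> X n xs = Y n xs)"

text \<open>op_comp p q b f g xs: A \<circ> B evaluated at xs, where A has order p (function f) and
  B has order q and parity b (function g). For p \<ge> 1, q = 0: A \<circ> y = A(y);
  for p = 0: y \<circ> B = 0; for p, q \<ge> 1:
  (A\<circ>B)(x) = A\<circ>B(x) + (-1)^{|B||x|} A(x)\<circ>B, for homogeneous x, extended linearly
  (x = proj False x + proj True x).\<close>
fun op_comp :: "('k::field \<Rightarrow> 'g::ab_group_add \<Rightarrow> 'g) \<Rightarrow> 'g set \<Rightarrow> 'g set \<Rightarrow>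
    nat \<Rightarrow> nat \<Rightarrow> bool \<Rightarrow> ('g list \<Rightarrow> 'g) \<Rightarrow> ('g list \<Rightarrow> 'g) \<Rightarrow> 'g list \<Rightarrow> 'g" where
  "op_comp sc G0 G1 p q b f g [] =
     (if p = 0 then 0 else if q = 0 then f [g []] else 0)"
| "op_comp sc G0 G1 p q b f g (x # xs) =
     (if p = 0 then 0 else if q = 0 then f (g [] # x # xs) else
       (\<Sum>i\<in>{False, True}.
          op_comp sc G0 G1 p (q - 1) (b \<noteq> i) f (\<lambda>ys. g (proj G0 G1 i x # ys)) xs
        + sc (psign (b \<and> i)) (op_comp sc G0 G1 (p - 1) q b (\<lambda>ys. f (proj G0 G1 i x # ys)) g xs)))"

text \<open>The product \<bullet> on operators of fixed orders: A_p \<bullet> B_q = p!q!/(p+q-1)! A_p \<circ> B_q,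
  A_p \<bullet> x = p A_p(x), x \<bullet> A_p = 0, x \<bullet> y = 0. Result has order p+q-1.\<close>
definition op_bul :: "('k::field_char_0 \<Rightarrow> 'g::ab_group_add \<Rightarrow> 'g) \<Rightarrow> 'g set \<Rightarrow> 'g set \<Rightarrow>
    nat \<Rightarrow> nat \<Rightarrow> bool \<Rightarrow> ('g list \<Rightarrow> 'g) \<Rightarrow> ('g list \<Rightarrow> 'g) \<Rightarrow> 'g list \<Rightarrow> 'g" where
  "op_bul sc G0 G1 p q b f g xs =
     (if p = 0 then 0
      else if q = 0 then sc (of_nat p) (f (g [] # xs))
      else sc (of_nat (fact p * fact q) / of_nat (fact (p + q - 1))) (op_comp sc G0 G1 p q b f g xs))"

text \<open>op_br p q b f g xs: [A,B] evaluated at xs (A order p, B order q and parity b). For p+q \<ge> 1, [A,B] has order p+q and is determined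
  by [A,B] \<bullet> x = [A,B\<bullet>x] + (-1)^{|x||B|}[A\<bullet>x,B]; since [A,B]\<bullet>x = (p+q)[A,B](x) this gives
  [A,B](x) = 1/(p+q) ([A,B\<bullet>x] + (-1)^{|x||B|}[A\<bullet>x,B]) for homogeneous x
  (and B\<bullet>x = q B(x), A\<bullet>x = p A(x), which are 0 for q = 0 resp. p = 0).\<close>
fun op_br :: "('k::field_char_0 \<Rightarrow> 'g::ab_group_add \<Rightarrow> 'g) \<Rightarrow> 'g set \<Rightarrow> 'g set \<Rightarrow> ('g \<Rightarrow> 'g \<Rightarrow> 'g) \<Rightarrow>
    nat \<Rightarrow> nat \<Rightarrow> bool \<Rightarrow> ('g list \<Rightarrow> 'g) \<Rightarrow> ('g list \<Rightarrow> 'g) \<Rightarrow> 'g list \<Rightarrow> 'g" where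
  "op_br sc G0 G1 lb p q b f g [] = (if p = 0 \<and> q = 0 then lb (f []) (g []) else 0)"
| "op_br sc G0 G1 lb p q b f g (x # xs) =
     (if p + q = 0 then 0 else
       sc (1 / of_nat (p + q))
         (\<Sum>i\<in>{False, True}.
            (if q = 0 then 0 else
               op_br sc G0 G1 lb p (q - 1) (b \<noteq> i) f
                 (op_bul sc G0 G1 q 0 False g (\<lambda>_. proj G0 G1 i x)) xs)
          + sc (psign (i \<and> b))
              (if p = 0 then 0 else
                 op_br sc G0 G1 lb (p - 1) q b
                   (op_bul sc G0 G1 p 0 False f (\<lambda>_. proj G0 G1 i x)) g xs)))"

text \<open>Second argument Y homogeneous of parity b. Component of order n of X \<bullet> Y collects
  the pairs of orders (p, q) with p \<ge> 1, p + q - 1 = n (other pairs give 0).\<close>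
definition U_bul :: "('k::field_char_0 \<Rightarrow> 'g::ab_group_add \<Rightarrow> 'g) \<Rightarrow> 'g set \<Rightarrow> 'g set \<Rightarrow> bool \<Rightarrow>
    (nat \<Rightarrow> 'g list \<Rightarrow> 'g) \<Rightarrow> (nat \<Rightarrow> 'g list \<Rightarrow> 'g) \<Rightarrow> nat \<Rightarrow> 'g list \<Rightarrow> 'g" where
  "U_bul sc G0 G1 b X Y n xs =
     (\<Sum>p\<in>{1..n+1}. op_bul sc G0 G1 p (n + 1 - p) b (X p) (Y (n + 1 - p)) xs)"

definition U_br :: "('k::field_char_0 \<Rightarrow> 'g::ab_group_add \<Rightarrow> 'g) \<Rightarrow> 'g set \<Rightarrow> 'g set \<Rightarrow>
    ('g \<Rightarrow> 'g \<Rightarrow> 'g) \<Rightarrow> bool \<Rightarrow>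
    (nat \<Rightarrow> 'g list \<Rightarrow> 'g) \<Rightarrow> (nat \<Rightarrow> 'g list \<Rightarrow> 'g) \<Rightarrow> nat \<Rightarrow> 'g list \<Rightarrow> 'g" where
  "U_br sc G0 G1 lb b X Y n xs =
     (\<Sum>p\<in>{0..n}. op_br sc G0 G1 lb p (n - p) b (X p) (Y (n - p)) xs)"

end

theory Submission
  imports Defs
begin

locale LSA =
  fixes sc :: "'k::field_char_0 \<Rightarrow> 'g::ab_group_add \<Rightarrow> 'g"
    and G0 G1 :: "'g set"
    and lb :: "'g \<Rightarrow> 'g \<Rightarrow> 'g"
  assumes LS: "lie_superalgebra sc G0 G1 lb"
begin

lemmas LSc = LS[unfolded lie_superalgebra_def]

lemma LS_vs: "vector_space sc"
  using LSc by (rule conjunct1)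

sublocale vector_space sc
  by (rule LS_vs)

lemma LS_gr: "\<forall>i. 0 \<in> gr G0 G1 i \<and> (\<forall>x\<in>gr G0 G1 i. \<forall>y\<in>gr G0 G1 i. x + y \<in> gr G0 G1 i) \<and>
          (\<forall>c. \<forall>x\<in>gr G0 G1 i. sc c x \<in> gr G0 G1 i)"
  using LSc[THEN conjunct2] by (rule conjunct1)

lemma LS_inter: "G0 \<inter> G1 = {0}"
  using LSc[THEN conjunct2, THEN conjunct2] by (rule conjunct1)

lemma LS_dec: "\<forall>x. \<exists>y\<in>G0. \<exists>z\<in>G1. x = y + z"
  using LSc[THEN conjunct2, THEN conjunct2, THEN conjunct2] by (rule conjunct1)

lemma lb_add1: "lb (x + y) z = lb x z + lb y z"
  using LSc[THEN conjunct2, THEN conjunct2, THEN conjunct2, THEN conjunct2, THEN conjunct1] by simp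
lemma lb_add2: "lb x (y + z) = lb x y + lb x z"
  using LSc[THEN conjunct2, THEN conjunct2, THEN conjunct2, THEN conjunct2, THEN conjunct2, THEN conjunct1] by simp
lemma lb_sc1: "lb (sc c x) y = sc c (lb x y)"
  using LSc[THEN conjunct2, THEN conjunct2, THEN conjunct2, THEN conjunct2, THEN conjunct2, THEN conjunct2, THEN conjunct1] by simp
lemma lb_sc2: "lb x (sc c y) = sc c (lb x y)"
  using LSc[THEN conjunct2, THEN conjunct2, THEN conjunct2, THEN conjunct2, THEN conjunct2, THEN conjunct2, THEN conjunct2, THEN conjunct1] by simp

lemma lb_zero1[simp]: "lb 0 y = 0"
  using lb_sc1[of 0 0 y] by simp
lemma lb_zero2[simp]: "lb x 0 = 0"
  using lb_sc2[of x 0 0] by simp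

lemma gr_zero[simp]: "0 \<in> gr G0 G1 i"
  using LS_gr by simp
lemma gr_add: "x \<in> gr G0 G1 i \<Longrightarrow> y \<in> gr G0 G1 i \<Longrightarrow> x + y \<in> gr G0 G1 i"
  using LS_gr by simp
lemma gr_sc: "x \<in> gr G0 G1 i \<Longrightarrow> sc c x \<in> gr G0 G1 i"
  using LS_gr by simp

lemma gr_neg: "x \<in> gr G0 G1 i \<Longrightarrow> - x \<in> gr G0 G1 i"
  using gr_sc[of x i "-1"] by simp

lemma gr_diff: "x \<in> gr G0 G1 i \<Longrightarrow> y \<in> gr G0 G1 i \<Longrightarrow> x - y \<in> gr G0 G1 i"
  by (metis gr_add gr_neg diff_conv_add_uminus)

lemma gr_inter: "x \<in> gr G0 G1 i \<Longrightarrow> x \<in> gr G0 G1 (\<not> i) \<Longrightarrow> x = 0"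
proof -
  assume a: "x \<in> gr G0 G1 i" "x \<in> gr G0 G1 (\<not> i)"
  have "G0 \<inter> G1 = {0}" by (rule LS_inter)
  then show ?thesis using a unfolding gr_def by (cases i) auto
qed

lemma gr_decomp: "\<exists>y. y \<in> gr G0 G1 i \<and> x - y \<in> gr G0 G1 (\<not> i)"
proof -
  obtain y z where y: "y \<in> G0" and z: "z \<in> G1" and x: "x = y + z"
    using LS_dec by blast
  show ?thesis
  proof (cases i)
    case True
    then show ?thesis using y z x by (intro exI[of _ z]) (auto simp: gr_def)
  next
    case False
    then show ?thesis using y z x by (intro exI[of _ y]) (auto simp: gr_def)
  qed
qed

lemma proj_unique: "y \<in> gr G0 G1 i \<Longrightarrow> x - y \<in> gr G0 G1 (\<not> i) \<Longrightarrow>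
   y' \<in> gr G0 G1 i \<Longrightarrow> x - y' \<in> gr G0 G1 (\<not> i) \<Longrightarrow> y = y'"
proof -
  assume a: "y \<in> gr G0 G1 i" "x - y \<in> gr G0 G1 (\<not> i)" "y' \<in> gr G0 G1 i" "x - y' \<in> gr G0 G1 (\<not> i)"
  have "y - y' \<in> gr G0 G1 i" using a gr_diff by blast
  moreover have "y - y' = (x - y') - (x - y)" by simp
  hence "y - y' \<in> gr G0 G1 (\<not> i)" using a gr_diff by metis
  ultimately show ?thesis using gr_inter by fastforce
qed

lemma proj_prop: "proj G0 G1 i x \<in> gr G0 G1 i \<and> x - proj G0 G1 i x \<in> gr G0 G1 (\<not> i)"
proof -
  obtain y where y: "y \<in> gr G0 G1 i \<and> x - y \<in> gr G0 G1 (\<not> i)"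
    using gr_decomp[of i x] by blast
  show ?thesis unfolding proj_def
    by (rule theI[of _ y]) (use y proj_unique in blast)+
qed

lemma proj_in: "proj G0 G1 i x \<in> gr G0 G1 i"
  using proj_prop by blast

lemma proj_eq: "y \<in> gr G0 G1 i \<Longrightarrow> x - y \<in> gr G0 G1 (\<not> i) \<Longrightarrow> proj G0 G1 i x = y"
  using proj_prop proj_unique by blast

lemma proj_self: "y \<in> gr G0 G1 i \<Longrightarrow> proj G0 G1 i y = y"
  by (rule proj_eq) auto

lemma proj_other: "y \<in> gr G0 G1 i \<Longrightarrow> proj G0 G1 (\<not> i) y = 0"
  by (rule proj_eq) auto

lemma proj_other': "y \<in> gr G0 G1 i \<Longrightarrow> j \<noteq> i \<Longrightarrow> proj G0 G1 j y = 0"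
  using proj_other[of y i] by (cases j; cases i) auto

lemma proj_sum: "proj G0 G1 False x + proj G0 G1 True x = x"
proof -
  have "x - proj G0 G1 False x \<in> gr G0 G1 True" using proj_prop[of False x] by simp
  hence "proj G0 G1 True x = x - proj G0 G1 False x"
    by (intro proj_eq) (auto intro: proj_in simp: proj_in[of False, simplified])
  thus ?thesis by simp
qed

lemma proj_zero[simp]: "proj G0 G1 i 0 = 0"
  by (rule proj_self) simp

lemma proj_sc: "proj G0 G1 i (sc c x) = sc c (proj G0 G1 i x)"
proof (rule proj_eq)
  show "sc c (proj G0 G1 i x) \<in> gr G0 G1 i" by (rule gr_sc[OF proj_in])
  have "sc c x - sc c (proj G0 G1 i x) = sc c (x - proj G0 G1 i x)" by (simp add: scale_right_diff_distrib)
  thus "sc c x - sc c (proj G0 G1 i x) \<in> gr G0 G1 (\<not> i)" using gr_sc proj_prop by metis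
qed

lemma proj_proj: "proj G0 G1 j (proj G0 G1 i x) = (if j = i then proj G0 G1 i x else 0)"
  using proj_self[OF proj_in] proj_other'[OF proj_in] by auto

end

context LSA
begin

abbreviation "BR \<equiv> op_br sc G0 G1 lb"
abbreviation "BUL \<equiv> op_bul sc G0 G1"
abbreviation "CMP \<equiv> op_comp sc G0 G1"
abbreviation "PR \<equiv> proj G0 G1"
abbreviation "GR \<equiv> gr G0 G1"

definition D :: "nat \<Rightarrow> ('g list \<Rightarrow> 'g) \<Rightarrow> 'g \<Rightarrow> 'g list \<Rightarrow> 'g" where
  "D k F x = (\<lambda>ys. sc (of_nat k) (F (x # ys)))"

definition sl :: "nat \<Rightarrow> ('g list \<Rightarrow> 'g) \<Rightarrow> bool" where
  "sl k F \<longleftrightarrow> (\<forall>ys zs a u. length ys + length zs + 1 = k \<longrightarrow> F (ys @ sc a u # zs) = sc a (F (ys @ u # zs)))"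

definition zk :: "nat \<Rightarrow> ('g list \<Rightarrow> 'g) \<Rightarrow> bool" where
  "zk k F \<longleftrightarrow> (\<forall>ys zs. length ys + length zs + 1 = k \<longrightarrow> F (ys @ 0 # zs) = 0)"

lemma D_zero[simp]: "D 0 F x = (\<lambda>_. 0)"
  by (simp add: D_def fun_eq_iff)

lemma bul0_D: "BUL k 0 b F (\<lambda>_. x) = D k F x"
  by (simp add: op_bul_def D_def fun_eq_iff)

lemma D_add: "D k (\<lambda>ys. g1 ys + g2 ys) x = (\<lambda>ys. D k g1 x ys + D k g2 x ys)"
  by (simp add: D_def fun_eq_iff scale_right_distrib)

lemma D_sc: "D k (\<lambda>ys. sc a (g ys)) x = (\<lambda>ys. sc a (D k g x ys))"
  by (simp add: D_def fun_eq_iff mult.commute)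

lemma sl_zk: "sl k F \<Longrightarrow> zk k F"
  unfolding sl_def zk_def
  by (metis scale_zero_left)

lemma br_Cons: "BR p q b f g (x # xs) = (if p + q = 0 then 0 else
   sc (1 / of_nat (p + q))
     (\<Sum>i\<in>{False, True}.
        (if q = 0 then 0 else BR p (q - 1) (b \<noteq> i) f (D q g (PR i x)) xs)
      + sc (psign (i \<and> b)) (if p = 0 then 0 else BR (p - 1) q b (D p f (PR i x)) g xs)))"
  by (simp only: op_br.simps bul0_D)

declare op_br.simps(2)[simp del]

lemma br_zero_g:
  assumes "\<And>ys. length ys = q \<Longrightarrow> g ys = 0"
  shows "BR p q b f g xs = 0"
  using assms
proof (induction xs arbitrary: p q b f g)
  case Nil
  then show ?case by simp
next
  case (Cons x xs)
  have 1: "(if q = 0 then 0 else BR p (q - 1) (b \<noteq> i) f (D q g (PR i x)) xs) = 0" for i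
  proof (cases "q = 0")
    case False
    show ?thesis unfolding if_not_P[OF False]
      by (rule Cons.IH) (use False in \<open>simp add: D_def Cons.prems\<close>)
  qed simp
  have 2: "(if p = 0 then 0 else BR (p - 1) q b (D p f (PR i x)) g xs) = 0" for i
  proof (cases "p = 0")
    case False
    show ?thesis unfolding if_not_P[OF False]
      by (rule Cons.IH) (simp add: Cons.prems)
  qed simp
  have 3: "(if q = 0 then 0 else BR p (q - 1) (b \<noteq> i) f (D q g (PR i x)) xs) + sc (psign (i \<and> b)) (if p = 0 then 0 else BR (p - 1) q b (D p f (PR i x)) g xs) = 0" for i
    by (simp only: 1 2 scale_zero_right add_0)
  show ?case by (simp only: br_Cons 3) simp
qed

lemma br_zero_f:
  assumes "\<And>ys. length ys = p \<Longrightarrow> f ys = 0"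
  shows "BR p q b f g xs = 0"
  using assms
proof (induction xs arbitrary: p q b f g)
  case Nil
  then show ?case by simp
next
  case (Cons x xs)
  have 1: "(if q = 0 then 0 else BR p (q - 1) (b \<noteq> i) f (D q g (PR i x)) xs) = 0" for i
  proof (cases "q = 0")
    case False
    show ?thesis unfolding if_not_P[OF False]
      by (rule Cons.IH) (simp add: Cons.prems)
  qed simp
  have 2: "(if p = 0 then 0 else BR (p - 1) q b (D p f (PR i x)) g xs) = 0" for i
  proof (cases "p = 0")
    case False
    show ?thesis unfolding if_not_P[OF False]
      by (rule Cons.IH) (use False in \<open>simp add: D_def Cons.prems\<close>)
  qed simp
  have 3: "(if q = 0 then 0 else BR p (q - 1) (b \<noteq> i) f (D q g (PR i x)) xs) + sc (psign (i \<and> b)) (if p = 0 then 0 else BR (p - 1) q b (D p f (PR i x)) g xs) = 0" for i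
    by (simp only: 1 2 scale_zero_right add_0)
  show ?case by (simp only: br_Cons 3) simp
qed

lemma br_cong:
  assumes "\<And>ys. length ys = p \<Longrightarrow> f1 ys = f2 ys" "\<And>ys. length ys = q \<Longrightarrow> g1 ys = g2 ys"
  shows "BR p q b f1 g1 xs = BR p q b f2 g2 xs"
  using assms
proof (induction xs arbitrary: p q b f1 f2 g1 g2)
  case Nil
  then show ?case by simp
next
  case (Cons x xs)
  have 1: "(if q = 0 then 0 else BR p (q - 1) (b \<noteq> i) f1 (D q g1 (PR i x)) xs) = (if q = 0 then 0 else BR p (q - 1) (b \<noteq> i) f2 (D q g2 (PR i x)) xs)" for i
  proof (cases "q = 0")
    case False
    show ?thesis unfolding if_not_P[OF False]
      by (rule Cons.IH) (use False in \<open>simp_all add: D_def Cons.prems\<close>)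
  qed simp
  have 2: "(if p = 0 then 0 else BR (p - 1) q b (D p f1 (PR i x)) g1 xs) = (if p = 0 then 0 else BR (p - 1) q b (D p f2 (PR i x)) g2 xs)" for i
  proof (cases "p = 0")
    case False
    show ?thesis unfolding if_not_P[OF False]
      by (rule Cons.IH) (use False in \<open>simp_all add: D_def Cons.prems\<close>)
  qed simp
  have 3: "(if q = 0 then 0 else BR p (q - 1) (b \<noteq> i) f1 (D q g1 (PR i x)) xs) + sc (psign (i \<and> b)) (if p = 0 then 0 else BR (p - 1) q b (D p f1 (PR i x)) g1 xs) = (if q = 0 then 0 else BR p (q - 1) (b \<noteq> i) f2 (D q g2 (PR i x)) xs) + sc (psign (i \<and> b)) (if p = 0 then 0 else BR (p - 1) q b (D p f2 (PR i x)) g2 xs)" for i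
    by (simp only: 1 2)
  show ?case by (simp only: br_Cons 3)
qed

lemma br_add_g: "BR p q b f (\<lambda>ys. g1 ys + g2 ys) xs = BR p q b f g1 xs + BR p q b f g2 xs"
proof (induction xs arbitrary: p q b f g1 g2)
  case Nil
  then show ?case by (simp add: lb_add2)
next
  case (Cons x xs)
  show ?case by (simp add: br_Cons D_add Cons.IH scale_right_distrib algebra_simps)
qed

lemma br_add_f: "BR p q b (\<lambda>ys. f1 ys + f2 ys) g xs = BR p q b f1 g xs + BR p q b f2 g xs"
proof (induction xs arbitrary: p q b f1 f2 g)
  case Nil
  then show ?case by (simp add: lb_add1)
next
  case (Cons x xs)
  show ?case by (simp add: br_Cons D_add Cons.IH scale_right_distrib algebra_simps)
qed

lemma br_sc_g: "BR p q b f (\<lambda>ys. sc a (g ys)) xs = sc a (BR p q b f g xs)"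
proof (induction xs arbitrary: p q b f g)
  case Nil
  then show ?case by (simp add: lb_sc2)
next
  case (Cons x xs)
  show ?case by (simp add: br_Cons D_sc Cons.IH scale_right_distrib mult.commute mult.left_commute)
qed

lemma br_sc_f: "BR p q b (\<lambda>ys. sc a (f ys)) g xs = sc a (BR p q b f g xs)"
proof (induction xs arbitrary: p q b f g)
  case Nil
  then show ?case by (simp add: lb_sc1)
next
  case (Cons x xs)
  show ?case by (simp add: br_Cons D_sc Cons.IH scale_right_distrib mult.commute mult.left_commute)
qed

end

context LSA
begin

lemma ifq: "(if q = 0 then 0 else BR p (q - 1) b' f (D q g v) xs) = BR p (q - 1) b' f (D q g v) xs"
  by (cases "q = 0") (simp_all add: br_zero_g)

lemma ifp: "(if p = 0 then 0 else BR (p - 1) q b f' g xs') = BR (p - 1) q b f' g xs'"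
  if "f' = D p f v" for f'
  using that by (cases "p = 0") (simp_all add: br_zero_f)

lemma br_Cons': "BR p q b f g (x # xs) = (if p + q = 0 then 0 else
   sc (1 / of_nat (p + q))
     (\<Sum>i\<in>{False, True}.
        BR p (q - 1) (b \<noteq> i) f (D q g (PR i x)) xs
      + sc (psign (i \<and> b)) (BR (p - 1) q b (D p f (PR i x)) g xs)))"
  by (simp only: br_Cons ifq ifp[OF refl])

lemma sum_bool_split: "(\<Sum>j\<in>{False, True}. t j) = t i + t (\<not> i)"
  by (cases i) (simp_all add: add.commute)

lemma D_zero_arg:
  assumes "\<And>zs. length zs + 1 = k \<Longrightarrow> F (0 # zs) = 0" "length ys = k - 1"
  shows "D k F 0 ys = 0"
proof (cases "k = 0")
  case False
  then show ?thesis using assms by (simp add: D_def)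
qed simp

lemma br_hom_cons:
  assumes v: "v \<in> GR i"
    and zf: "\<And>zs. length zs + 1 = p \<Longrightarrow> f (0 # zs) = 0"
    and zg: "\<And>zs. length zs + 1 = q \<Longrightarrow> g (0 # zs) = 0"
  shows "BR p q b f g (v # xs) = (if p + q = 0 then 0 else
    sc (1 / of_nat (p + q)) (BR p (q - 1) (b \<noteq> i) f (D q g v) xs
      + sc (psign (i \<and> b)) (BR (p - 1) q b (D p f v) g xs)))"
proof -
  have t1: "PR i v = v" using proj_self[OF v] .
  have t2: "PR (\<not> i) v = 0" using proj_other[OF v] .
  have t3: "BR p (q - 1) b' f (D q g 0) xs = 0" for b'
    by (rule br_zero_g) (rule D_zero_arg[where k=q and F=g, OF zg])
  have t4: "BR (p - 1) q b (D p f 0) g xs = 0"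
    by (rule br_zero_f) (rule D_zero_arg[where k=p and F=f, OF zf])
  show ?thesis
    by (simp only: br_Cons' sum_bool_split[of _ i] t1 t2 t3 t4 scale_zero_right add_0_right)
qed

lemma br_decomp:
  assumes zf: "\<And>zs. length zs + 1 = p \<Longrightarrow> f (0 # zs) = 0"
    and zg: "\<And>zs. length zs + 1 = q \<Longrightarrow> g (0 # zs) = 0"
  shows "BR p q b f g (x # xs) = (\<Sum>k\<in>{False, True}. BR p q b f g (PR k x # xs))"
proof -
  have e: "BR p q b f g (PR k x # xs) = (if p + q = 0 then 0 else
    sc (1 / of_nat (p + q)) (BR p (q - 1) (b \<noteq> k) f (D q g (PR k x)) xs
      + sc (psign (k \<and> b)) (BR (p - 1) q b (D p f (PR k x)) g xs)))" for k
    by (rule br_hom_cons[where p=p and q=q and f=f and g=g, OF proj_in zf zg])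
  show ?thesis
    unfolding e by (simp only: br_Cons') (simp add: scale_right_distrib)
qed

lemma sl_D: "sl k F \<Longrightarrow> sl (k - 1) (D k F x)"
  unfolding sl_def
proof (intro allI impI)
  fix ys zs :: "'g list" and a :: 'k and u :: 'g
  assume s: "\<forall>ys zs a u. length ys + length zs + 1 = k \<longrightarrow> F (ys @ sc a u # zs) = sc a (F (ys @ u # zs))"
    and l: "length ys + length zs + 1 = k - 1"
  have "F ((x # ys) @ sc a u # zs) = sc a (F ((x # ys) @ u # zs))"
    using s[rule_format, of "x # ys" zs a u] l by simp
  then show "D k F x (ys @ sc a u # zs) = sc a (D k F x (ys @ u # zs))"
    by (simp add: D_def scale_left_commute)
qed

lemma sl_pa: "sl k F \<Longrightarrow> sl (k - 1) (\<lambda>ys. F (x # ys))"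
  unfolding sl_def
proof (intro allI impI)
  fix ys zs :: "'g list" and a :: 'k and u :: 'g
  assume s: "\<forall>ys zs a u. length ys + length zs + 1 = k \<longrightarrow> F (ys @ sc a u # zs) = sc a (F (ys @ u # zs))"
    and l: "length ys + length zs + 1 = k - 1"
  have "F ((x # ys) @ sc a u # zs) = sc a (F ((x # ys) @ u # zs))"
    using s[rule_format, of "x # ys" zs a u] l by simp
  then show "F (x # ys @ sc a u # zs) = sc a (F (x # ys @ u # zs))"
    by simp
qed

lemma zk_pa: "zk k F \<Longrightarrow> zk (k - 1) (\<lambda>ys. F (x # ys))"
  unfolding zk_def
proof (intro allI impI)
  fix ys zs :: "'g list"
  assume s: "\<forall>ys zs. length ys + length zs + 1 = k \<longrightarrow> F (ys @ 0 # zs) = 0"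
    and l: "length ys + length zs + 1 = k - 1"
  have "F ((x # ys) @ 0 # zs) = 0"
    using s[rule_format, of "x # ys" zs] l by simp
  then show "F (x # ys @ 0 # zs) = 0"
    by simp
qed

lemma zk_first: "zk k F \<Longrightarrow> length zs + 1 = k \<Longrightarrow> F (0 # zs) = 0"
  unfolding zk_def by (metis append_Nil list.size(3) add_0)

lemma sl_first: "sl k F \<Longrightarrow> length zs + 1 = k \<Longrightarrow> F (sc a u # zs) = sc a (F (u # zs))"
  unfolding sl_def by (metis append_Nil list.size(3) add_0)

lemma D_sc_arg:
  assumes "sl k F" "length ys = k - 1"
  shows "D k F (sc a u) ys = sc a (D k F u ys)"
proof (cases "k = 0")
  case False
  then show ?thesis using assms sl_first[of k F ys a u] by (simp add: D_def scale_left_commute)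
qed simp

lemma sl_br: "sl p f \<Longrightarrow> sl q g \<Longrightarrow> sl (p + q) (BR p q b f g)"
  unfolding sl_def[of "p + q"]
proof (intro allI impI)
  fix ys zs :: "'g list" and a :: 'k and u :: 'g
  assume "sl p f" "sl q g" "length ys + length zs + 1 = p + q"
  then show "BR p q b f g (ys @ sc a u # zs) = sc a (BR p q b f g (ys @ u # zs))"
  proof (induction ys arbitrary: p q b f g)
    case Nil
    have X: "BR p (q - 1) b' f (D q g (PR i (sc a u))) zs = sc a (BR p (q - 1) b' f (D q g (PR i u)) zs)" for b' i
    proof -
      have "BR p (q - 1) b' f (D q g (PR i (sc a u))) zs = BR p (q - 1) b' f (\<lambda>ys. sc a (D q g (PR i u) ys)) zs"
        by (rule br_cong) (simp_all add: proj_sc D_sc_arg[OF Nil.prems(2)])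
      then show ?thesis by (simp add: br_sc_g)
    qed
    have Y: "BR (p - 1) q b (D p f (PR i (sc a u))) g zs = sc a (BR (p - 1) q b (D p f (PR i u)) g zs)" for i
    proof -
      have "BR (p - 1) q b (D p f (PR i (sc a u))) g zs = BR (p - 1) q b (\<lambda>ys. sc a (D p f (PR i u) ys)) g zs"
        by (rule br_cong) (simp_all add: proj_sc D_sc_arg[OF Nil.prems(1)])
      then show ?thesis by (simp add: br_sc_f)
    qed
    show ?case
      by (simp only: append_Nil br_Cons' X Y) (simp add: scale_right_distrib mult_ac)
  next
    case (Cons y ys)
    have X: "BR p (q - 1) b' f (D q g (PR i y)) (ys @ sc a u # zs) = sc a (BR p (q - 1) b' f (D q g (PR i y)) (ys @ u # zs))" for b' i
    proof (cases "q = 0")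
      case True
      then show ?thesis by (simp add: br_zero_g)
    next
      case False
      have "sl (q - 1) (D q g (PR i y))" by (rule sl_D) (rule Cons.prems)
      then show ?thesis
        by (intro Cons.IH) (use Cons.prems False in \<open>simp_all\<close>)
    qed
    have Y: "BR (p - 1) q b (D p f (PR i y)) g (ys @ sc a u # zs) = sc a (BR (p - 1) q b (D p f (PR i y)) g (ys @ u # zs))" for i
    proof (cases "p = 0")
      case True
      then show ?thesis by (simp add: br_zero_f)
    next
      case False
      have "sl (p - 1) (D p f (PR i y))" by (rule sl_D) (rule Cons.prems)
      then show ?thesis
        by (intro Cons.IH) (use Cons.prems False in \<open>simp_all\<close>)
    qed
    show ?case
      by (simp only: append_Cons br_Cons' X Y) (simp add: scale_right_distrib mult_ac)
  qed
qed

definition hom :: "nat \<Rightarrow> bool \<Rightarrow> ('g list \<Rightarrow> 'g) \<Rightarrow> bool" where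
  "hom k c h \<longleftrightarrow> (\<forall>ys ps. length ys = k \<longrightarrow> length ps = k \<longrightarrow> (\<forall>j<k. ys ! j \<in> GR (ps ! j)) \<longrightarrow>
        h ys \<in> GR (foldr (\<lambda>p acc. p \<noteq> acc) ps c))"

lemma foldr_xor: "foldr (\<lambda>p acc. p \<noteq> acc) ps (c \<noteq> i) = (i \<noteq> foldr (\<lambda>p acc. p \<noteq> acc) ps c)"
  by (induction ps) auto

lemma hom_D:
  assumes h: "hom k c H" and v: "v \<in> GR i" and k: "k \<ge> 1"
  shows "hom (k - 1) (c \<noteq> i) (D k H v)"
  unfolding hom_def
proof (intro allI impI)
  fix ys :: "'g list" and ps :: "bool list"
  assume l1: "length ys = k - 1" and l2: "length ps = k - 1" and g: "\<forall>j<k - 1. ys ! j \<in> GR (ps ! j)"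
  have "\<forall>j<k. (v # ys) ! j \<in> GR ((i # ps) ! j)"
  proof (intro allI impI)
    fix j assume "j < k"
    then show "(v # ys) ! j \<in> GR ((i # ps) ! j)"
      using g v l1 by (cases j) auto
  qed
  then have "H (v # ys) \<in> GR (foldr (\<lambda>p acc. p \<noteq> acc) (i # ps) c)"
    using h l1 l2 k unfolding hom_def by (metis Suc_pred' length_Cons less_le_trans zero_less_one)
  then show "D k H v ys \<in> GR (foldr (\<lambda>p acc. p \<noteq> acc) ps (c \<noteq> i))"
    unfolding D_def foldr_xor by (simp add: gr_sc)
qed

lemma hom_nil: "hom 0 c h \<Longrightarrow> h [] \<in> GR c"
  unfolding hom_def by (metis foldr.simps(1) id_apply length_0_conv less_nat_zero_code)

end

context LSA
begin

lemma cmp_p0: "CMP 0 q b f g xs = 0"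
  by (cases xs) simp_all

lemma cmp_q0: "p \<noteq> 0 \<Longrightarrow> CMP p 0 b f g xs = f (g [] # xs)"
  by (cases xs) simp_all

lemma cmp_Cons: "p \<noteq> 0 \<Longrightarrow> q \<noteq> 0 \<Longrightarrow> CMP p q b f g (x # xs) =
   (\<Sum>i\<in>{False, True}.
          CMP p (q - 1) (b \<noteq> i) f (\<lambda>ys. g (PR i x # ys)) xs
        + sc (psign (b \<and> i)) (CMP (p - 1) q b (\<lambda>ys. f (PR i x # ys)) g xs))"
  by simp

declare op_comp.simps(2)[simp del]

lemma cmp_add_f: "CMP p q b (\<lambda>ys. f1 ys + f2 ys) g xs = CMP p q b f1 g xs + CMP p q b f2 g xs"
proof (induction xs arbitrary: p q b f1 f2 g)
  case Nil
  then show ?case by simp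
next
  case (Cons x xs)
  show ?case
  proof (cases "p = 0 \<or> q = 0")
    case True
    then show ?thesis by (cases "p = 0") (auto simp: cmp_p0 cmp_q0)
  next
    case False
    then have p: "p \<noteq> 0" and q: "q \<noteq> 0" by auto
    show ?thesis
      by (simp only: cmp_Cons[OF p q] Cons.IH) (simp add: scale_right_distrib algebra_simps)
  qed
qed

lemma cmp_sc_f: "CMP p q b (\<lambda>ys. sc a (f ys)) g xs = sc a (CMP p q b f g xs)"
proof (induction xs arbitrary: p q b f g)
  case Nil
  then show ?case by simp
next
  case (Cons x xs)
  show ?case
  proof (cases "p = 0 \<or> q = 0")
    case True
    then show ?thesis by (cases "p = 0") (auto simp: cmp_p0 cmp_q0)
  next
    case False
    then have p: "p \<noteq> 0" and q: "q \<noteq> 0" by auto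
    show ?thesis
      by (simp only: cmp_Cons[OF p q] Cons.IH) (simp add: scale_right_distrib mult_ac)
  qed
qed

lemma cmp_zero_f:
  assumes "\<And>ys. length ys = p \<Longrightarrow> f ys = 0" "length xs + 1 = p + q"
  shows "CMP p q b f g xs = 0"
  using assms
proof (induction xs arbitrary: p q b f g)
  case Nil
  then show ?case by simp
next
  case (Cons x xs)
  show ?case
  proof (cases "p = 0")
    case True
    then show ?thesis by (simp add: cmp_p0)
  next
    case p: False
    show ?thesis
    proof (cases "q = 0")
      case True
      then show ?thesis using p Cons.prems by (simp add: cmp_q0)
    next
      case q: False
      have 1: "CMP p (q - 1) b' f (\<lambda>ys. g (PR j x # ys)) xs = 0" for j b'
        by (rule Cons.IH) (use Cons.prems p q in auto)
      have 2: "CMP (p - 1) q b (\<lambda>ys. f (PR j x # ys)) g xs = 0" for j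
        by (rule Cons.IH) (use Cons.prems p q in auto)
      show ?thesis
        by (simp only: cmp_Cons[OF p q] 1 2 scale_zero_right add_0 sum.neutral_const)
    qed
  qed
qed

lemma cmp_zero_g:
  assumes "zk p f" "\<And>ys. length ys = q \<Longrightarrow> g ys = 0" "length xs + 1 = p + q"
  shows "CMP p q b f g xs = 0"
  using assms
proof (induction xs arbitrary: p q b f g)
  case Nil
  then show ?case using zk_first[of p f "[]"] by (cases "p = 0") (auto simp: cmp_q0)
next
  case (Cons x xs)
  show ?case
  proof (cases "p = 0")
    case True
    then show ?thesis by (simp add: cmp_p0)
  next
    case p: False
    show ?thesis
    proof (cases "q = 0")
      case True
      then show ?thesis using p Cons.prems zk_first[of p f "x # xs"] by (simp add: cmp_q0)
    next
      case q: False
      have 1: "CMP p (q - 1) b' f (\<lambda>ys. g (PR j x # ys)) xs = 0" for j b'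
        by (rule Cons.IH) (use Cons.prems p q in auto)
      have "zk (p - 1) (\<lambda>ys. f (PR j x # ys))" for j by (rule zk_pa) (rule Cons.prems)
      then have 2: "CMP (p - 1) q b (\<lambda>ys. f (PR j x # ys)) g xs = 0" for j
        by (intro Cons.IH) (use Cons.prems p q in auto)
      show ?thesis
        by (simp only: cmp_Cons[OF p q] 1 2 scale_zero_right add_0 sum.neutral_const)
    qed
  qed
qed

lemma cmp_sc_g:
  assumes "sl p f" "length xs + 1 = p + q"
  shows "CMP p q b f (\<lambda>ys. sc a (g ys)) xs = sc a (CMP p q b f g xs)"
  using assms
proof (induction xs arbitrary: p q b f g)
  case Nil
  then show ?case using sl_first[of p f "[]" a "g []"] by (cases "p = 0") (auto simp: cmp_q0)
next
  case (Cons x xs)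
  show ?case
  proof (cases "p = 0")
    case True
    then show ?thesis by (simp add: cmp_p0)
  next
    case p: False
    show ?thesis
    proof (cases "q = 0")
      case True
      then show ?thesis using p Cons.prems sl_first[of p f "x # xs" a "g []"] by (simp add: cmp_q0)
    next
      case q: False
      have 1: "CMP p (q - 1) b' f (\<lambda>ys. sc a (g (PR j x # ys))) xs = sc a (CMP p (q - 1) b' f (\<lambda>ys. g (PR j x # ys)) xs)" for j b'
        by (rule Cons.IH) (use Cons.prems p q in auto)
      have "sl (p - 1) (\<lambda>ys. f (PR j x # ys))" for j by (rule sl_pa) (rule Cons.prems)
      then have 2: "CMP (p - 1) q b (\<lambda>ys. f (PR j x # ys)) (\<lambda>ys. sc a (g ys)) xs = sc a (CMP (p - 1) q b (\<lambda>ys. f (PR j x # ys)) g xs)" for j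
        by (intro Cons.IH) (use Cons.prems p q in auto)
      show ?thesis
        by (simp only: cmp_Cons[OF p q] 1 2) (simp add: scale_right_distrib mult_ac)
    qed
  qed
qed

lemma cmp_hom_cons:
  assumes v: "v \<in> GR i" and P: "P \<noteq> 0" and R: "R \<noteq> 0" and zF: "zk P F"
    and zH: "\<And>zs. length zs + 1 = R \<Longrightarrow> H (0 # zs) = 0" and l: "length xs + 2 = P + R"
  shows "CMP P R c F H (v # xs) = CMP P (R - 1) (c \<noteq> i) F (\<lambda>ys. H (v # ys)) xs
     + sc (psign (c \<and> i)) (CMP (P - 1) R c (\<lambda>ys. F (v # ys)) H xs)"
proof -
  have t1: "PR i v = v" using proj_self[OF v] .
  have t2: "PR (\<not> i) v = 0" using proj_other[OF v] .
  have t3: "CMP P (R - 1) b' F (\<lambda>ys. H (0 # ys)) xs = 0" for b'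
    by (rule cmp_zero_g[OF zF]) (use zH R l in auto)
  have t4: "CMP (P - 1) R c (\<lambda>ys. F (0 # ys)) H xs = 0"
    by (rule cmp_zero_f) (use zk_first[OF zF] P l in auto)
  show ?thesis
    by (simp only: cmp_Cons[OF P R] sum_bool_split[of _ i] t1 t2 t3 t4 scale_zero_right add_0_right)
qed

lemma cmp_decomp:
  assumes P: "P \<noteq> 0" and R: "R \<noteq> 0" and zF: "zk P F"
    and zH: "\<And>zs. length zs + 1 = R \<Longrightarrow> H (0 # zs) = 0" and l: "length xs + 2 = P + R"
  shows "CMP P R c F H (x # xs) = (\<Sum>k\<in>{False, True}. CMP P R c F H (PR k x # xs))"
proof -
  have e: "CMP P R c F H (PR k x # xs) = CMP P (R - 1) (c \<noteq> k) F (\<lambda>ys. H (PR k x # ys)) xs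
     + sc (psign (c \<and> k)) (CMP (P - 1) R c (\<lambda>ys. F (PR k x # ys)) H xs)" for k
    by (rule cmp_hom_cons[where F=F and H=H and P=P and R=R, OF proj_in P R zF zH l])
  show ?thesis
    unfolding e by (simp only: cmp_Cons[OF P R])
qed

lemma bul_add_f: "BUL p q b (\<lambda>ys. f1 ys + f2 ys) g xs = BUL p q b f1 g xs + BUL p q b f2 g xs"
  by (simp add: op_bul_def cmp_add_f scale_right_distrib)

lemma bul_sc_f: "BUL p q b (\<lambda>ys. sc a (f ys)) g xs = sc a (BUL p q b f g xs)"
  by (simp add: op_bul_def cmp_sc_f mult.commute)

lemma bul_zero_f:
  assumes "\<And>ys. length ys = p \<Longrightarrow> f ys = 0" "length xs + 1 = p + q"
  shows "BUL p q b f g xs = 0"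
  using assms by (simp add: op_bul_def cmp_zero_f)

lemma bul_zero_all: "BUL p q b (\<lambda>_. 0) g xs = 0"
  using bul_sc_f[of p q b 0 "\<lambda>_. 0" g xs] by simp

lemma br_zero_all_f: "BR p q b (\<lambda>_. 0) g xs = 0"
  by (rule br_zero_f) simp

lemma br_zero_all_g: "BR p q b f (\<lambda>_. 0) xs = 0"
  by (rule br_zero_g) simp

lemma bul_sum_f: "BUL p q b (\<lambda>ys. \<Sum>k\<in>A. F k ys) g xs = (\<Sum>k\<in>A. BUL p q b (F k) g xs)"
proof (induction A rule: infinite_finite_induct)
  case (infinite A)
  then show ?case by (simp add: bul_zero_all)
next
  case empty
  then show ?case by (simp add: bul_zero_all)
next
  case (insert x F)
  then show ?case by (simp add: bul_add_f)
qed

lemma br_sum_f: "BR p q b (\<lambda>ys. \<Sum>k\<in>A. F k ys) g xs = (\<Sum>k\<in>A. BR p q b (F k) g xs)"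
proof (induction A rule: infinite_finite_induct)
  case (infinite A)
  then show ?case by (simp add: br_zero_all_f)
next
  case empty
  then show ?case by (simp add: br_zero_all_f)
next
  case (insert x F)
  then show ?case by (simp add: br_add_f)
qed

lemma br_sum_g: "BR p q b f (\<lambda>ys. \<Sum>k\<in>A. G k ys) xs = (\<Sum>k\<in>A. BR p q b f (G k) xs)"
proof (induction A rule: infinite_finite_induct)
  case (infinite A)
  then show ?case by (simp add: br_zero_all_g)
next
  case empty
  then show ?case by (simp add: br_zero_all_g)
next
  case (insert x F)
  then show ?case by (simp add: br_add_g)
qed

end

context LSA
begin

lemma bul_zk1:
  assumes sg: "sl q g" and sh: "sl r h" and l: "length zs + 2 = q + r"
  shows "BUL q r c g h (0 # zs) = 0"
proof (cases "q = 0")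
  case True
  then show ?thesis by (simp add: op_bul_def)
next
  case q: False
  show ?thesis
  proof (cases "r = 0")
    case True
    have z: "zk q g" by (rule sl_zk[OF sg])
    have "g ([h []] @ 0 # zs) = 0"
      using z[unfolded zk_def, rule_format, of "[h []]" zs] l True by simp
    then show ?thesis using q True by (simp add: op_bul_def)
  next
    case r: False
    have "CMP q r c g h (0 # zs) = 0"
    proof -
      have t3: "CMP q (r - 1) b' g (\<lambda>ys. h (0 # ys)) zs = 0" for b'
        by (rule cmp_zero_g[OF sl_zk[OF sg]]) (use zk_first[OF sl_zk[OF sh]] r l in auto)
      have t4: "CMP (q - 1) r c (\<lambda>ys. g (0 # ys)) h zs = 0"
        by (rule cmp_zero_f) (use zk_first[OF sl_zk[OF sg]] q l in auto)
      show ?thesis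
        by (simp only: cmp_Cons[OF q r] proj_zero t3 t4 scale_zero_right add_0_right sum.neutral_const)
    qed
    then show ?thesis using q r by (simp add: op_bul_def)
  qed
qed

lemma coef_gen:
  assumes "fR = R * fR'" "fN1 = N1 * fN" "N1 \<noteq> 0" "fN \<noteq> 0"
  shows "(of_nat N1 * (of_nat (fP * fR) / of_nat fN1) :: 'k) = of_nat (fP * fR') / of_nat fN * of_nat R"
  using assms by (simp add: field_simps)

lemma fact_coef1:
  assumes P: "P \<noteq> 0" and R: "R \<noteq> 0"
  shows "(of_nat (P + R - 1) * (of_nat (fact P * fact R) / of_nat (fact (P + R - 1))) :: 'k)
     = of_nat (fact P * fact (R - 1)) / of_nat (fact (P + R - 2)) * of_nat R"
proof (rule coef_gen)
  show "fact R = R * fact (R - 1)" using R fact_reduce[of R, where 'a=nat] by (simp add: of_nat_id)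
  have "fact (P + R - 1) = (P + R - 1) * fact (P + R - 1 - 1)" using P R fact_reduce[of "P + R - 1", where 'a=nat] by (simp add: of_nat_id)
  then show "fact (P + R - 1) = (P + R - 1) * fact (P + R - 2)" by (metis diff_diff_left one_add_one)
qed (use P R in simp_all)

lemma fact_coef2:
  assumes P: "P \<noteq> 0" and R: "R \<noteq> 0"
  shows "(of_nat (P + R - 1) * (of_nat (fact P * fact R) / of_nat (fact (P + R - 1))) :: 'k)
     = of_nat (fact (P - 1) * fact R) / of_nat (fact (P + R - 2)) * of_nat P"
proof -
  have "(of_nat (P + R - 1) * (of_nat (fact P * fact R) / of_nat (fact (P + R - 1))) :: 'k)
     = of_nat (P + R - 1) * (of_nat (fact R * fact P) / of_nat (fact (P + R - 1)))" by (simp add: mult.commute)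
  also have "\<dots> = of_nat (fact R * fact (P - 1)) / of_nat (fact (P + R - 2)) * of_nat P"
  proof (rule coef_gen)
    show "fact P = P * fact (P - 1)" using P fact_reduce[of P, where 'a=nat] by (simp add: of_nat_id)
    have "fact (P + R - 1) = (P + R - 1) * fact (P + R - 1 - 1)" using P R fact_reduce[of "P + R - 1", where 'a=nat] by (simp add: of_nat_id)
    then show "fact (P + R - 1) = (P + R - 1) * fact (P + R - 2)" by (metis diff_diff_left one_add_one)
  qed (use P R in simp_all)
  finally show ?thesis by (simp add: mult.commute)
qed

lemma bul_R1:
  assumes v: "v \<in> GR i" and P: "P \<noteq> 0" and R: "R \<noteq> 0" and sF: "sl P F" and sH: "sl R H"
    and l: "length ys + 2 = P + R"
  shows "sc (of_nat (P + R - 1)) (BUL P R c F H (v # ys))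
    = BUL P (R - 1) (c \<noteq> i) F (D R H v) ys + sc (psign (c \<and> i)) (BUL (P - 1) R c (D P F v) H ys)"
proof -
  define T1 where "T1 = CMP P (R - 1) (c \<noteq> i) F (\<lambda>zs. H (v # zs)) ys"
  define T2 where "T2 = CMP (P - 1) R c (\<lambda>zs. F (v # zs)) H ys"
  define \<kappa> :: 'k where "\<kappa> = of_nat (P + R - 1) * (of_nat (fact P * fact R) / of_nat (fact (P + R - 1)))"
  have h: "CMP P R c F H (v # ys) = T1 + sc (psign (c \<and> i)) T2"
    unfolding T1_def T2_def
    by (rule cmp_hom_cons[OF v P R sl_zk[OF sF]]) (use zk_first[OF sl_zk[OF sH]] l in auto)
  have L: "sc (of_nat (P + R - 1)) (BUL P R c F H (v # ys)) = sc \<kappa> (T1 + sc (psign (c \<and> i)) T2)"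
    using P R unfolding \<kappa>_def op_bul_def h by simp
  have R1: "BUL P (R - 1) (c \<noteq> i) F (D R H v) ys = sc \<kappa> T1"
  proof (cases "R = 1")
    case True
    have "T1 = F (H [v] # ys)" unfolding T1_def True using P by (simp add: cmp_q0)
    moreover have "\<kappa> = of_nat P"
      unfolding \<kappa>_def fact_coef1[OF P R] using True P
      by (simp add: fact_reduce[of P])
    ultimately show ?thesis using True P by (simp add: op_bul_def D_def)
  next
    case False
    have "CMP P (R - 1) (c \<noteq> i) F (D R H v) ys = sc (of_nat R) T1"
      unfolding T1_def D_def by (rule cmp_sc_g[OF sF]) (use l R in simp)
    moreover have "P + (R - 1) - 1 = P + R - 2" using R by simp
    ultimately show ?thesis using False P R
      unfolding \<kappa>_def fact_coef1[OF P R] by (simp add: op_bul_def mult.commute)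
  qed
  have R2: "BUL (P - 1) R c (D P F v) H ys = sc \<kappa> T2"
  proof (cases "P = 1")
    case True
    then show ?thesis unfolding T2_def by (simp add: op_bul_def cmp_p0)
  next
    case False
    have "CMP (P - 1) R c (D P F v) H ys = sc (of_nat P) T2"
      unfolding T2_def D_def by (rule cmp_sc_f)
    moreover have "P - 1 + R - 1 = P + R - 2" using P by simp
    ultimately show ?thesis using False P R
      unfolding \<kappa>_def fact_coef2[OF P R] by (simp add: op_bul_def mult.commute)
  qed
  show ?thesis
    unfolding L R1 R2 by (simp add: scale_right_distrib mult.commute)
qed

end

context LSA
begin

lemma bul_decomp:
  assumes P: "P \<noteq> 0" and R: "R \<noteq> 0" and zF: "zk P F"
    and zH: "\<And>zs. length zs + 1 = R \<Longrightarrow> H (0 # zs) = 0" and l: "length xs + 2 = P + R"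
  shows "BUL P R c F H (x # xs) = (\<Sum>k\<in>{False, True}. BUL P R c F H (PR k x # xs))"
proof -
  have e: "CMP P R c F H (x # xs) = (\<Sum>k\<in>{False, True}. CMP P R c F H (PR k x # xs))"
    by (rule cmp_decomp[where F=F and H=H and P=P and R=R, OF P R zF zH l])
  show ?thesis using P R by (simp add: op_bul_def e scale_right_distrib)
qed

lemma bul_r0: "BUL k 0 b F H = D k F (H [])"
  by (simp add: op_bul_def D_def fun_eq_iff)

lemma bul_p0: "BUL 0 r b F H = (\<lambda>_. 0)"
  by (simp add: op_bul_def fun_eq_iff)

lemma br_zero_fun_g: "BR p q b f (\<lambda>_. 0) = (\<lambda>_. 0)"
  by (rule ext) (rule br_zero_all_g)

lemma br_zero_fun_f: "BR p q b (\<lambda>_. 0) g = (\<lambda>_. 0)"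
  by (rule ext) (rule br_zero_all_f)

lemma sc_inv: "n \<noteq> 0 \<Longrightarrow> sc (of_nat n) (sc (1 / of_nat n) Y) = Y"
  by simp

lemma psign_T: "psign True = -1" and psign_F: "psign False = 1"
  by (simp_all add: psign_def)

lemma main_T:
  assumes "sl p f" "sl q g" "sl r h" "hom r c h" "length xs + 1 = p + q + r"
  shows "BUL (p + q) r c (BR p q b f g) h xs =
     BR p (q + r - 1) (b \<noteq> c) f (BUL q r c g h) xs
     + sc (psign (b \<and> c)) (BR (p + r - 1) q b (BUL p r c f h) g xs)"
  using assms
proof (induction "p + q + r" arbitrary: p q r f g h b c xs rule: less_induct)
  case less
  note sf = less.prems(1) and sg = less.prems(2) and sh = less.prems(3) and hh = less.prems(4)
    and len = less.prems(5)
  have zf: "\<And>zs. length zs + 1 = p \<Longrightarrow> f (0 # zs) = 0" using zk_first[OF sl_zk[OF sf]] .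
  have zg: "\<And>zs. length zs + 1 = q \<Longrightarrow> g (0 # zs) = 0" using zk_first[OF sl_zk[OF sg]] .
  have zh: "\<And>zs. length zs + 1 = r \<Longrightarrow> h (0 # zs) = 0" using zk_first[OF sl_zk[OF sh]] .
  show ?case
  proof (cases "p + q = 0")
    case True
    then have p0: "p = 0" and q0: "q = 0" by auto
    show ?thesis
      unfolding p0 q0 by (simp add: bul_p0 br_zero_all_g br_zero_all_f)
  next
    case pq: False
    show ?thesis
    proof (cases "r = 0")
      case r0: True
      have v: "h [] \<in> GR c" using hom_nil hh r0 by simp
      have "BUL (p + q) r c (BR p q b f g) h xs = sc (of_nat (p + q)) (BR p q b f g (h [] # xs))"
        using r0 pq by (simp add: bul_r0 D_def)
      also have "\<dots> = BR p (q - 1) (b \<noteq> c) f (D q g (h [])) xs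
          + sc (psign (c \<and> b)) (BR (p - 1) q b (D p f (h [])) g xs)"
        by (simp only: br_hom_cons[where p=p and q=q and f=f and g=g, OF v zf zg] if_not_P[OF pq] sc_inv[OF pq])
      finally show ?thesis
        using r0 by (simp add: bul_r0 conj_commute)
    next
      case r: False
      obtain x ys where xs: "xs = x # ys" using len pq r by (cases xs) auto
      have lys: "length ys + 2 = p + q + r" using len xs by simp
      have sF: "sl (p + q) (BR p q b f g)" by (rule sl_br[OF sf sg])
      have dL: "BUL (p + q) r c (BR p q b f g) h (x # ys)
          = (\<Sum>k\<in>{False, True}. BUL (p + q) r c (BR p q b f g) h (PR k x # ys))"
        by (rule bul_decomp[where F="BR p q b f g" and H=h and P="p + q" and R=r, OF pq r sl_zk[OF sF] zh]) (use lys in simp_all)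
      have zG: "BUL q r c g h (0 # zs) = 0" if "length zs + 1 = q + r - 1" for zs
        by (rule bul_zk1[OF sg sh]) (use that r in simp)
      have zFb: "BUL p r c f h (0 # zs) = 0" if "length zs + 1 = p + r - 1" for zs
        by (rule bul_zk1[OF sf sh]) (use that r in simp)
      have dR1: "BR p (q + r - 1) (b \<noteq> c) f (BUL q r c g h) (x # ys)
          = (\<Sum>k\<in>{False, True}. BR p (q + r - 1) (b \<noteq> c) f (BUL q r c g h) (PR k x # ys))"
        by (rule br_decomp[where f=f and g="BUL q r c g h", OF zf zG])
      have dR2: "BR (p + r - 1) q b (BUL p r c f h) g (x # ys)
          = (\<Sum>k\<in>{False, True}. BR (p + r - 1) q b (BUL p r c f h) g (PR k x # ys))"
        by (rule br_decomp[where f="BUL p r c f h" and g=g, OF zFb zg])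
      define N where "N = p + q + r - 1"
      have N0: "N \<noteq> 0" using pq r unfolding N_def by arith
      have step: "BUL (p + q) r c (BR p q b f g) h (v # ys) =
         BR p (q + r - 1) (b \<noteq> c) f (BUL q r c g h) (v # ys)
         + sc (psign (b \<and> c)) (BR (p + r - 1) q b (BUL p r c f h) g (v # ys))"
        if v: "v \<in> GR k" for v k
      proof -
        define h' where "h' = D r h v"
        define g' where "g' = D q g v"
        define f' where "f' = D p f v"
        have sh': "sl (r - 1) h'" unfolding h'_def by (rule sl_D[OF sh])
        have hh': "hom (r - 1) (c \<noteq> k) h'" unfolding h'_def by (rule hom_D[OF hh v]) (use r in simp)
        have sg': "sl (q - 1) g'" unfolding g'_def by (rule sl_D[OF sg])
        have sf': "sl (p - 1) f'" unfolding f'_def by (rule sl_D[OF sf])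
        define X1 where "X1 = BR p (q + r - 2) (b \<noteq> (c \<noteq> k)) f (BUL q (r - 1) (c \<noteq> k) g h') ys"
        define X2 where "X2 = BR (p + r - 2) q b (BUL p (r - 1) (c \<noteq> k) f h') g ys"
        define X3 where "X3 = BR p (q + r - 2) (b \<noteq> (c \<noteq> k)) f (BUL (q - 1) r c g' h) ys"
        define X4 where "X4 = BR (p + r - 1) (q - 1) (b \<noteq> k) (BUL p r c f h) g' ys"
        define X5 where "X5 = BR (p - 1) (q + r - 1) (b \<noteq> c) f' (BUL q r c g h) ys"
        define X6 where "X6 = BR (p + r - 2) q b (BUL (p - 1) r c f' h) g ys"
        define L1 where "L1 = BUL (p + q) (r - 1) (c \<noteq> k) (BR p q b f g) h' ys"
        define L2 where "L2 = BUL (p + q - 1) r c (BR p (q - 1) (b \<noteq> k) f g') h ys"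
        define L3 where "L3 = BUL (p + q - 1) r c (BR (p - 1) q b f' g) h ys"
        have DF: "D (p + q) (BR p q b f g) v
            = (\<lambda>zs. BR p (q - 1) (b \<noteq> k) f g' zs + sc (psign (k \<and> b)) (BR (p - 1) q b f' g zs))"
        proof (rule ext)
          fix zs
          show "D (p + q) (BR p q b f g) v zs
            = BR p (q - 1) (b \<noteq> k) f g' zs + sc (psign (k \<and> b)) (BR (p - 1) q b f' g zs)"
            unfolding g'_def f'_def
            by (simp only: D_def[of "p + q" "BR p q b f g" v] br_hom_cons[where p=p and q=q and f=f and g=g, OF v zf zg] if_not_P[OF pq] sc_inv[OF pq])
        qed
        have HL: "sc (of_nat N) (BUL (p + q) r c (BR p q b f g) h (v # ys))
            = L1 + sc (psign (c \<and> k)) (L2 + sc (psign (k \<and> b)) L3)"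
        proof -
          have "sc (of_nat N) (BUL (p + q) r c (BR p q b f g) h (v # ys))
              = BUL (p + q) (r - 1) (c \<noteq> k) (BR p q b f g) (D r h v) ys
                + sc (psign (c \<and> k)) (BUL (p + q - 1) r c (D (p + q) (BR p q b f g) v) h ys)"
            unfolding N_def by (rule bul_R1[OF v pq r sF sh]) (use lys in simp)
          then show ?thesis
            unfolding DF L1_def L2_def L3_def h'_def by (simp add: bul_add_f bul_sc_f)
        qed
        have o1: "q + (r - 1) - 1 = q + r - 2" "p + (r - 1) - 1 = p + r - 2" using r by auto
        have H1: "L1 = X1 + sc (psign (b \<and> (c \<noteq> k))) X2"
        proof -
          have "L1 = BR p (q + (r - 1) - 1) (b \<noteq> (c \<noteq> k)) f (BUL q (r - 1) (c \<noteq> k) g h') ys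
             + sc (psign (b \<and> (c \<noteq> k))) (BR (p + (r - 1) - 1) q b (BUL p (r - 1) (c \<noteq> k) f h') g ys)"
            unfolding L1_def by (rule less.hyps[OF _ sf sg sh' hh']) (use r lys in auto)
          then show ?thesis unfolding o1 X1_def X2_def .
        qed
        have H2: "L2 = X3 + sc (psign ((b \<noteq> k) \<and> c)) X4"
        proof (cases "q = 0")
          case True
          then show ?thesis
            unfolding L2_def X3_def X4_def g'_def
            by (simp add: br_zero_all_g br_zero_fun_g bul_zero_all bul_p0)
        next
          case q: False
          have o2: "q - 1 + r - 1 = q + r - 2" "p + (q - 1) = p + q - 1" using q by auto
          have bb: "((b \<noteq> k) \<noteq> c) = (b \<noteq> (c \<noteq> k))" by auto
          have "L2 = BR p (q - 1 + r - 1) ((b \<noteq> k) \<noteq> c) f (BUL (q - 1) r c g' h) ys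
             + sc (psign ((b \<noteq> k) \<and> c)) (BR (p + r - 1) (q - 1) (b \<noteq> k) (BUL p r c f h) g' ys)"
            unfolding L2_def o2(2)[symmetric] by (rule less.hyps[OF _ sf sg' sh hh]) (use q lys in auto)
          then show ?thesis unfolding o2(1) bb X3_def X4_def .
        qed
        have H3: "L3 = X5 + sc (psign (b \<and> c)) X6"
        proof (cases "p = 0")
          case True
          then show ?thesis
            unfolding L3_def X5_def X6_def f'_def
            by (simp add: br_zero_all_f br_zero_fun_f bul_zero_all bul_p0)
        next
          case p: False
          have o3: "p - 1 + r - 1 = p + r - 2" "p - 1 + q = p + q - 1" using p by auto
          have "L3 = BR (p - 1) (q + r - 1) (b \<noteq> c) f' (BUL q r c g h) ys
             + sc (psign (b \<and> c)) (BR (p - 1 + r - 1) q b (BUL (p - 1) r c f' h) g ys)"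
            unfolding L3_def o3(2)[symmetric] by (rule less.hyps[OF _ sf' sg sh hh]) (use p lys in auto)
          then show ?thesis unfolding o3(1) X5_def X6_def .
        qed
        have HRa: "sc (of_nat N) (BR p (q + r - 1) (b \<noteq> c) f (BUL q r c g h) (v # ys))
            = X1 + sc (psign (c \<and> k)) X3 + sc (psign (k \<and> (b \<noteq> c))) X5"
        proof (cases "q = 0")
          case True
          then show ?thesis
            unfolding X1_def X3_def X5_def by (simp add: bul_p0 br_zero_all_g)
        next
          case q: False
          have e0: "p + (q + r - 1) = N" using r unfolding N_def by simp
          have "sc (of_nat N) (BR p (q + r - 1) (b \<noteq> c) f (BUL q r c g h) (v # ys))
              = BR p (q + r - 1 - 1) ((b \<noteq> c) \<noteq> k) f (D (q + r - 1) (BUL q r c g h) v) ys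
                + sc (psign (k \<and> (b \<noteq> c))) (BR (p - 1) (q + r - 1) (b \<noteq> c) (D p f v) (BUL q r c g h) ys)"
            by (simp only: br_hom_cons[where p=p and q="q + r - 1" and f=f and g="BUL q r c g h", OF v zf zG] e0 if_not_P[OF N0] sc_inv[OF N0])
          moreover have "BR p (q + r - 1 - 1) ((b \<noteq> c) \<noteq> k) f (D (q + r - 1) (BUL q r c g h) v) ys
              = X1 + sc (psign (c \<and> k)) X3"
          proof -
            have "BR p (q + r - 1 - 1) ((b \<noteq> c) \<noteq> k) f (D (q + r - 1) (BUL q r c g h) v) ys
              = BR p (q + r - 1 - 1) ((b \<noteq> c) \<noteq> k) f
                  (\<lambda>zs. BUL q (r - 1) (c \<noteq> k) g h' zs + sc (psign (c \<and> k)) (BUL (q - 1) r c g' h zs)) ys"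
            proof (rule br_cong)
              fix zs :: "'g list"
              assume "length zs = q + r - 1 - 1"
              then have "length zs + 2 = q + r" using q r by simp
              then show "D (q + r - 1) (BUL q r c g h) v zs
                = BUL q (r - 1) (c \<noteq> k) g h' zs + sc (psign (c \<and> k)) (BUL (q - 1) r c g' h zs)"
                unfolding D_def[of "q + r - 1" "BUL q r c g h" v] h'_def g'_def by (rule bul_R1[OF v q r sg sh])
            qed simp
            also have "\<dots> = X1 + sc (psign (c \<and> k)) X3"
            proof -
              have bb: "((b \<noteq> c) \<noteq> k) = (b \<noteq> (c \<noteq> k))" by auto
              have o4: "q + r - 1 - 1 = q + r - 2" by simp
              show ?thesis unfolding X1_def X3_def bb o4 by (simp add: br_add_g br_sc_g)
            qed
            finally show ?thesis .
          qed
          ultimately show ?thesis unfolding X5_def f'_def by simp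
        qed
        have HRb: "sc (of_nat N) (BR (p + r - 1) q b (BUL p r c f h) g (v # ys))
            = X4 + sc (psign (k \<and> b)) (X2 + sc (psign (c \<and> k)) X6)"
        proof (cases "p = 0")
          case True
          then show ?thesis
            unfolding X2_def X4_def X6_def by (simp add: bul_p0 br_zero_all_f)
        next
          case p: False
          have e0: "p + r - 1 + q = N" using r unfolding N_def by simp
          have "sc (of_nat N) (BR (p + r - 1) q b (BUL p r c f h) g (v # ys))
              = BR (p + r - 1) (q - 1) (b \<noteq> k) (BUL p r c f h) (D q g v) ys
                + sc (psign (k \<and> b)) (BR (p + r - 1 - 1) q b (D (p + r - 1) (BUL p r c f h) v) g ys)"
            by (simp only: br_hom_cons[where p="p + r - 1" and q=q and f="BUL p r c f h" and g=g, OF v zFb zg] e0 if_not_P[OF N0] sc_inv[OF N0])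
          moreover have "BR (p + r - 1 - 1) q b (D (p + r - 1) (BUL p r c f h) v) g ys
              = X2 + sc (psign (c \<and> k)) X6"
          proof -
            have "BR (p + r - 1 - 1) q b (D (p + r - 1) (BUL p r c f h) v) g ys
              = BR (p + r - 1 - 1) q b
                  (\<lambda>zs. BUL p (r - 1) (c \<noteq> k) f h' zs + sc (psign (c \<and> k)) (BUL (p - 1) r c f' h zs)) g ys"
            proof (rule br_cong)
              fix zs :: "'g list"
              assume "length zs = p + r - 1 - 1"
              then have "length zs + 2 = p + r" using p r by simp
              then show "D (p + r - 1) (BUL p r c f h) v zs
                = BUL p (r - 1) (c \<noteq> k) f h' zs + sc (psign (c \<and> k)) (BUL (p - 1) r c f' h zs)"
                unfolding D_def[of "p + r - 1" "BUL p r c f h" v] h'_def f'_def by (rule bul_R1[OF v p r sf sh])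
            qed simp
            also have "\<dots> = X2 + sc (psign (c \<and> k)) X6"
            proof -
              have o4: "p + r - 1 - 1 = p + r - 2" by simp
              show ?thesis unfolding X2_def X6_def o4 by (simp add: br_add_f br_sc_f)
            qed
            finally show ?thesis .
          qed
          ultimately show ?thesis unfolding X4_def g'_def by simp
        qed
        have "sc (of_nat N) (BUL (p + q) r c (BR p q b f g) h (v # ys))
           = sc (of_nat N) (BR p (q + r - 1) (b \<noteq> c) f (BUL q r c g h) (v # ys)
             + sc (psign (b \<and> c)) (BR (p + r - 1) q b (BUL p r c f h) g (v # ys)))"
        proof -
          have "sc (of_nat N) (BR p (q + r - 1) (b \<noteq> c) f (BUL q r c g h) (v # ys)
             + sc (psign (b \<and> c)) (BR (p + r - 1) q b (BUL p r c f h) g (v # ys)))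
             = sc (of_nat N) (BR p (q + r - 1) (b \<noteq> c) f (BUL q r c g h) (v # ys))
             + sc (psign (b \<and> c)) (sc (of_nat N) (BR (p + r - 1) q b (BUL p r c f h) g (v # ys)))"
            by (simp add: scale_right_distrib scale_left_commute)
          also have "\<dots> = X1 + sc (psign (c \<and> k)) X3 + sc (psign (k \<and> (b \<noteq> c))) X5
             + sc (psign (b \<and> c)) (X4 + sc (psign (k \<and> b)) (X2 + sc (psign (c \<and> k)) X6))"
            unfolding HRa HRb ..
          also have "\<dots> = X1 + sc (psign (b \<and> (c \<noteq> k))) X2
             + sc (psign (c \<and> k)) (X3 + sc (psign ((b \<noteq> k) \<and> c)) X4
             + sc (psign (k \<and> b)) (X5 + sc (psign (b \<and> c)) X6))"
            by (cases b; cases c; cases k) (simp_all add: psign_T psign_F scale_right_distrib algebra_simps)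
          finally show ?thesis unfolding HL H1 H2 H3 by simp
        qed
        then show ?thesis using N0 by simp
      qed
      show ?thesis
        unfolding xs dL dR1 dR2
        by (simp add: step[OF proj_in] scale_right_distrib)
    qed
  qed
qed

end

definition TRI :: "nat \<Rightarrow> (nat \<Rightarrow> nat \<Rightarrow> 'a::comm_monoid_add) \<Rightarrow> 'a" where
  "TRI N g = (\<Sum>i\<in>{0..N}. \<Sum>j\<in>{0..N - i}. g i j)"

lemma rect_row:
  fixes i N :: nat
  assumes "i \<le> N"
  shows "(\<Sum>j\<in>{0..N - i}. g j) = (\<Sum>j\<in>{0..N}. if i + j \<le> N then g j else (0::'a::comm_monoid_add))"
proof -
  have "(\<Sum>j\<in>{0..N}. if i + j \<le> N then g j else 0) = sum g {j \<in> {0..N}. i + j \<le> N}"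
    by (rule sum.inter_filter[symmetric]) simp
  moreover have "{j \<in> {0..N}. i + j \<le> N} = {0..N - i}" using assms by auto
  ultimately show ?thesis by simp
qed

lemma TRI_rect: "TRI N g = (\<Sum>i\<in>{0..N}. \<Sum>j\<in>{0..N}. if i + j \<le> N then g i j else 0)"
  unfolding TRI_def by (rule sum.cong[OF refl]) (simp add: rect_row)

lemma TRI_swap: "TRI N g = (\<Sum>j\<in>{0..N}. \<Sum>i\<in>{0..N - j}. g i j)"
proof -
  have "(\<Sum>j\<in>{0..N}. \<Sum>i\<in>{0..N - j}. g i j) = (\<Sum>j\<in>{0..N}. \<Sum>i\<in>{0..N}. if i + j \<le> N then g i j else 0)"
    by (rule sum.cong[OF refl]) (simp add: rect_row add.commute)
  moreover have "(\<Sum>i\<in>{0..N}. \<Sum>j\<in>{0..N}. if i + j \<le> N then g i j else 0)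
      = (\<Sum>j\<in>{0..N}. \<Sum>i\<in>{0..N}. if i + j \<le> N then g i j else 0)"
    by (rule sum.swap)
  ultimately show ?thesis unfolding TRI_rect by simp
qed

lemma TRI_diag:
  assumes g0: "g 0 0 = 0"
  shows "(\<Sum>k\<in>{1..N}. \<Sum>i\<in>{0..k}. g i (k - i)) = TRI N g"
proof -
  have 1: "(\<Sum>k\<in>{0..N}. \<Sum>i\<in>{0..k}. g i (k - i)) = (\<Sum>k\<in>{1..N}. \<Sum>i\<in>{0..k}. g i (k - i))"
    using sum.atLeast_Suc_atMost[of 0 N "\<lambda>k. \<Sum>i\<in>{0..k}. g i (k - i)"] g0 by simp
  have 2: "(\<Sum>k\<in>{0..N}. \<Sum>i\<in>{0..k}. g i (k - i)) = (\<Sum>(i, j)\<in>{(i, j). i + j \<le> N}. g i j)"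
    using sum.triangle_reindex_eq[of g N] by (simp add: atLeast0AtMost)
  have 3: "Sigma {0..N} (\<lambda>i. {0..N - i}) = {(i, j). i + j \<le> N}" by auto
  have 4: "TRI N g = (\<Sum>(i, j)\<in>{(i, j). i + j \<le> N}. g i j)"
    unfolding TRI_def 3[symmetric] by (subst sum.Sigma) auto
  show ?thesis using 1 2 4 by simp
qed

lemma TRI_cong: "(\<And>i j. i + j \<le> N \<Longrightarrow> g i j = h i j) \<Longrightarrow> TRI N g = TRI N h"
  unfolding TRI_def by (intro sum.cong refl) auto


context LSA
begin

lemma U_hom_sl:
  assumes "U_hom sc G0 G1 a X"
  shows "sl p (X p)"
proof -
  have H: "\<forall>n xs k c u. length xs = n \<longrightarrow> k < n \<longrightarrow> X n (xs[k := sc c u]) = sc c (X n (xs[k := u]))"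
    using assms unfolding U_hom_def U_elem_def by blast
  show ?thesis unfolding sl_def
  proof (intro allI impI)
    fix ys zs :: "'g list" and a' :: 'k and u :: 'g
    assume l: "length ys + length zs + 1 = p"
    have "X p ((ys @ u # zs)[length ys := sc a' u]) = sc a' (X p ((ys @ u # zs)[length ys := u]))"
      using H[rule_format, of "ys @ u # zs" p "length ys" a' u] l by simp
    then show "X p (ys @ sc a' u # zs) = sc a' (X p (ys @ u # zs))" by simp
  qed
qed

lemma U_hom_hom:
  assumes "U_hom sc G0 G1 a X"
  shows "hom p a (X p)"
  using assms unfolding U_hom_def hom_def by blast

lemma U_main:
  assumes hA: "U_hom sc G0 G1 a A" and hB: "U_hom sc G0 G1 b B" and hC: "U_hom sc G0 G1 c C"
  shows "U_eq
           (U_bul sc G0 G1 c (U_br sc G0 G1 lb b A B) C)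
           (\<lambda>n xs. U_br sc G0 G1 lb (b \<noteq> c) A (U_bul sc G0 G1 c B C) n xs
                 + sc (psign (b \<and> c)) (U_br sc G0 G1 lb b (U_bul sc G0 G1 c A C) B n xs))"
  unfolding U_eq_def
proof (intro allI impI)
  fix n :: nat and xs :: "'g list"
  assume l: "length xs = n"
  define N where "N = n + 1"
  have NS: "N = Suc n" unfolding N_def by simp
  define g where "g i j = BUL (i + j) (N - i - j) c (BR i j b (A i) (B j)) (C (N - i - j)) xs" for i j
  define F1 where "F1 i j = BR i (n - i) (b \<noteq> c) (A i) (BUL j (N - i - j) c (B j) (C (N - i - j))) xs" for i j
  define F2 where "F2 i j = BR (n - j) j b (BUL i (N - i - j) c (A i) (C (N - i - j))) (B j) xs" for i j
  have Ubr: "U_br sc G0 G1 lb b' X Y m = (\<lambda>ys. \<Sum>p\<in>{0..m}. BR p (m - p) b' (X p) (Y (m - p)) ys)" for b' X Y m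
    by (simp add: U_br_def fun_eq_iff)
  have Ubul: "U_bul sc G0 G1 b' X Y m = (\<lambda>ys. \<Sum>p\<in>{1..m + 1}. BUL p (m + 1 - p) b' (X p) (Y (m + 1 - p)) ys)" for b' X Y m
    by (simp add: U_bul_def fun_eq_iff)
  have L: "U_bul sc G0 G1 c (U_br sc G0 G1 lb b A B) C n xs = TRI N g"
  proof -
    have "U_bul sc G0 G1 c (U_br sc G0 G1 lb b A B) C n xs = (\<Sum>s\<in>{1..N}. \<Sum>p\<in>{0..s}. g p (s - p))"
      unfolding U_bul_def N_def
    proof (rule sum.cong[OF refl])
      fix s assume s: "s \<in> {1..n + 1}"
      have "BUL s (n + 1 - s) c (U_br sc G0 G1 lb b A B s) (C (n + 1 - s)) xs
          = (\<Sum>p\<in>{0..s}. BUL s (n + 1 - s) c (BR p (s - p) b (A p) (B (s - p))) (C (n + 1 - s)) xs)"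
        unfolding Ubr by (rule bul_sum_f)
      also have "\<dots> = (\<Sum>p\<in>{0..s}. g p (s - p))"
      proof (rule sum.cong[OF refl])
        fix p assume p: "p \<in> {0..s}"
        have e1: "p + (s - p) = s" and e2: "N - p - (s - p) = n + 1 - s" using p s unfolding N_def by auto
        show "BUL s (n + 1 - s) c (BR p (s - p) b (A p) (B (s - p))) (C (n + 1 - s)) xs = g p (s - p)"
          unfolding g_def e1 e2 ..
      qed
      finally show "BUL s (n + 1 - s) c (U_br sc G0 G1 lb b A B s) (C (n + 1 - s)) xs
          = (\<Sum>p\<in>{0..s}. g p (s - p))" .
    qed
    also have "\<dots> = TRI N g"
      by (rule TRI_diag) (simp add: g_def bul_p0)
    finally show ?thesis .
  qed
  have T: "TRI N g = TRI N F1 + sc (psign (b \<and> c)) (TRI N F2)"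
  proof -
    have "TRI N g = TRI N (\<lambda>i j. F1 i j + sc (psign (b \<and> c)) (F2 i j))"
    proof (rule TRI_cong)
      fix i j assume ij: "i + j \<le> N"
      have o: "j + (N - i - j) - 1 = n - i" "i + (N - i - j) - 1 = n - j" using ij unfolding N_def by auto
      have "g i j = BR i (j + (N - i - j) - 1) (b \<noteq> c) (A i) (BUL j (N - i - j) c (B j) (C (N - i - j))) xs
          + sc (psign (b \<and> c)) (BR (i + (N - i - j) - 1) j b (BUL i (N - i - j) c (A i) (C (N - i - j))) (B j) xs)"
        unfolding g_def
        by (rule main_T[OF U_hom_sl[OF hA] U_hom_sl[OF hB] U_hom_sl[OF hC] U_hom_hom[OF hC]])
          (use l ij in \<open>simp add: N_def\<close>)
      then show "g i j = F1 i j + sc (psign (b \<and> c)) (F2 i j)"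
        unfolding o F1_def F2_def .
    qed
    then show ?thesis
      unfolding TRI_def by (simp add: sum.distrib scale_sum_right)
  qed
  have R1: "U_br sc G0 G1 lb (b \<noteq> c) A (U_bul sc G0 G1 c B C) n xs = TRI N F1"
  proof -
    have "TRI N F1 = (\<Sum>i\<in>{0..n}. \<Sum>j\<in>{0..N - i}. F1 i j) + (\<Sum>j\<in>{0..N - Suc n}. F1 (Suc n) j)"
      unfolding TRI_def NS by (rule sum.atLeast0_atMost_Suc)
    also have "(\<Sum>j\<in>{0..N - Suc n}. F1 (Suc n) j) = 0"
      unfolding NS F1_def by (simp add: bul_p0 br_zero_all_g)
    also have "(\<Sum>i\<in>{0..n}. \<Sum>j\<in>{0..N - i}. F1 i j)
        = (\<Sum>i\<in>{0..n}. \<Sum>j\<in>{1..n - i + 1}. BR i (n - i) (b \<noteq> c) (A i) (BUL j (n - i + 1 - j) c (B j) (C (n - i + 1 - j))) xs)"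
    proof (rule sum.cong[OF refl])
      fix i assume i: "i \<in> {0..n}"
      have "(\<Sum>j\<in>{0..N - i}. F1 i j) = F1 i 0 + (\<Sum>j\<in>{Suc 0..N - i}. F1 i j)"
        by (rule sum.atLeast_Suc_atMost) simp
      also have "F1 i 0 = 0" unfolding F1_def by (simp add: bul_p0 br_zero_all_g)
      also have "(\<Sum>j\<in>{Suc 0..N - i}. F1 i j)
          = (\<Sum>j\<in>{1..n - i + 1}. BR i (n - i) (b \<noteq> c) (A i) (BUL j (n - i + 1 - j) c (B j) (C (n - i + 1 - j))) xs)"
      proof -
        have e0: "N - i = n - i + 1" using i unfolding N_def by auto
        have e1: "N - i - j = n - i + 1 - j" for j using i unfolding N_def by auto
        show ?thesis unfolding e0 F1_def e1 by simp
      qed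
      finally show "(\<Sum>j\<in>{0..N - i}. F1 i j)
          = (\<Sum>j\<in>{1..n - i + 1}. BR i (n - i) (b \<noteq> c) (A i) (BUL j (n - i + 1 - j) c (B j) (C (n - i + 1 - j))) xs)"
        by simp
    qed
    also have "\<dots> = U_br sc G0 G1 lb (b \<noteq> c) A (U_bul sc G0 G1 c B C) n xs"
      unfolding U_br_def Ubul by (rule sum.cong[OF refl], rule br_sum_g[symmetric])
    finally show ?thesis by simp
  qed
  have R2: "U_br sc G0 G1 lb b (U_bul sc G0 G1 c A C) B n xs = TRI N F2"
  proof -
    have "TRI N F2 = (\<Sum>j\<in>{0..N}. \<Sum>i\<in>{0..N - j}. F2 i j)"
      by (rule TRI_swap)
    also have "\<dots> = (\<Sum>j\<in>{0..n}. \<Sum>i\<in>{0..N - j}. F2 i j) + (\<Sum>i\<in>{0..N - Suc n}. F2 i (Suc n))"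
      unfolding NS by (rule sum.atLeast0_atMost_Suc)
    also have "(\<Sum>i\<in>{0..N - Suc n}. F2 i (Suc n)) = 0"
      unfolding NS F2_def by (simp add: bul_p0 br_zero_all_f)
    also have "(\<Sum>j\<in>{0..n}. \<Sum>i\<in>{0..N - j}. F2 i j) = (\<Sum>j\<in>{0..n}. \<Sum>i\<in>{1..N - j}. F2 i j)"
    proof (rule sum.cong[OF refl])
      fix j assume j: "j \<in> {0..n}"
      have "(\<Sum>i\<in>{0..N - j}. F2 i j) = F2 0 j + (\<Sum>i\<in>{Suc 0..N - j}. F2 i j)"
        by (rule sum.atLeast_Suc_atMost) simp
      also have "F2 0 j = 0" unfolding F2_def by (simp add: bul_p0 br_zero_all_f)
      finally show "(\<Sum>i\<in>{0..N - j}. F2 i j) = (\<Sum>i\<in>{1..N - j}. F2 i j)" by simp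
    qed
    also have "\<dots> = (\<Sum>m\<in>{0..n}. \<Sum>i\<in>{1..N - (n + 0 - m)}. F2 i (n + 0 - m))"
      by (rule sum.atLeastAtMost_rev)
    also have "\<dots> = (\<Sum>m\<in>{0..n}. \<Sum>i\<in>{1..m + 1}. BR m (n - m) b (BUL i (m + 1 - i) c (A i) (C (m + 1 - i))) (B (n - m)) xs)"
    proof (rule sum.cong[OF refl])
      fix m assume m: "m \<in> {0..n}"
      have e00: "n + 0 - m = n - m" by simp
      have e0: "N - (n - m) = m + 1" "n - (n - m) = m" using m unfolding N_def by auto
      have e1: "N - i - (n - m) = m + 1 - i" for i using m unfolding N_def by auto
      show "(\<Sum>i\<in>{1..N - (n + 0 - m)}. F2 i (n + 0 - m))
          = (\<Sum>i\<in>{1..m + 1}. BR m (n - m) b (BUL i (m + 1 - i) c (A i) (C (m + 1 - i))) (B (n - m)) xs)"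
        unfolding e00 unfolding e0 F2_def e1 e0 ..
    qed
    also have "\<dots> = U_br sc G0 G1 lb b (U_bul sc G0 G1 c A C) B n xs"
      unfolding U_br_def Ubul by (rule sum.cong[OF refl], rule br_sum_f[symmetric])
    finally show ?thesis by simp
  qed
  show "U_bul sc G0 G1 c (U_br sc G0 G1 lb b A B) C n xs =
      U_br sc G0 G1 lb (b \<noteq> c) A (U_bul sc G0 G1 c B C) n xs
      + sc (psign (b \<and> c)) (U_br sc G0 G1 lb b (U_bul sc G0 G1 c A C) B n xs)"
    unfolding L R1 R2 T ..
qed

end


theorem proposition4p3:
  fixes sc :: "'k::field_char_0 \<Rightarrow> 'g::ab_group_add \<Rightarrow> 'g"
    and G0 G1 :: "'g set"
    and lb :: "'g \<Rightarrow> 'g \<Rightarrow> 'g"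
    and A B C :: "nat \<Rightarrow> 'g list \<Rightarrow> 'g"
    and a b c :: bool
  assumes "lie_superalgebra sc G0 G1 lb"
    and "U_hom sc G0 G1 a A"
    and "U_hom sc G0 G1 b B"
    and "U_hom sc G0 G1 c C"
  shows "U_eq
           (U_bul sc G0 G1 c (U_br sc G0 G1 lb b A B) C)
           (\<lambda>n xs. U_br sc G0 G1 lb (b \<noteq> c) A (U_bul sc G0 G1 c B C) n xs
                 + sc (psign (b \<and> c)) (U_br sc G0 G1 lb b (U_bul sc G0 G1 c A C) B n xs))"
  by (rule LSA.U_main[OF LSA.intro[OF assms(1)] assms(2) assms(3) assms(4)])

end
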